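(* Let $T^{2,2}$ be the policy with $T^{2,2}_i=\mathcal{R}_{2,2}(T_i^* )$ for every $i\in[n]$. Then $T^{2,2}$ is resource-feasible and $F(T^{2,2})\le\sqrt2\cdot\mathrm{OPT}(P)$.
   Context: An instance consists of integers $n\ge 1$, $D\ge 1$; a joint ordering cost $K_0>0$; for each commodity $i\in[n]$ an ordering cost $K_i>0$ and a holding coefficient $H_i>0$; and resource coefficients $\alpha_{id}\ge 0$. A policy is $T=(T_1,\dots,T_n)\in\mathbb{R}_{>0}^n$; it is resource-feasible if $\sum_{i}\alpha_{id}/T_i\le 1$ for every $d\in[D]$. For $g>0$, $\Delta\ge 0$, $\mathcal{M}_{g,\Delta}=\{0,g,\dots,\lfloor\Delta/g\rfloor g\}$; $N(T,\Delta)=|\bigcup_{i}\mathcal{M}_{T_i,\Delta}|$; $J(T)=K_0\limsup_{\Delta\to\infty}N(T,\Delta)/\Delta$; $F(T)=J(T)+\sum_i(K_i/T_i+H_iT_i)$. The convex relaxation (P) is: minimize $K_0/T_{\min}+\sum_{i\in[n]}(K_i/T_i+H_iT_i)$ over $(T_{\min},T_1,\dots,T_n)$ subject to $T_i\ge T_{\min}\ge0$ for all $i$ and $\sum_i\alpha_{id}/T_i\le1$ for all $d$. $\mathrm{OPT}(P)$ is its optimal value and $T^*=(T^*_{\min},T^*_1,\dots,T^*_n)$ is a fixed optimal solution (with $T^*_{\min}>0$). For integers $m\ge2$, $k\ge1$: $\mathcal{G}_{m,k}=\{m^{p/k}T^*_{\min}:p\in\mathbb{Z}\}$ and $\mathcal{R}_{m,k}(t)=\min\{g\in\mathcal{G}_{m,k}:g>t\}$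 for $t>0$. *)

theory Defs
  imports "HOL-Analysis.Analysis" "HOL-Library.Extended_Real" "HOL-Library.Liminf_Limsup"
begin

text \<open>Commodities are indexed by i < n, resources by d < D; policies are
  functions nat \<Rightarrow> real whose values outside [n] are irrelevant.
  Resource coefficients: alpha i d.\<close>

definition resource_feasible ::
  "nat \<Rightarrow> nat \<Rightarrow> (nat \<Rightarrow> nat \<Rightarrow> real) \<Rightarrow> (nat \<Rightarrow> real) \<Rightarrow> bool" where
  "resource_feasible n D alpha T \<longleftrightarrow>
     (\<forall>i<n. T i > 0) \<and> (\<forall>d<D. (\<Sum>i<n. alpha i d / T i) \<le> 1)"

definition mults :: "real \<Rightarrow> real \<Rightarrow> real set" where
  "mults g \<Delta> = {real k * g | k::nat. k \<le> nat \<lfloor>\<Delta> / g\<rfloor>}"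

definition Ncount :: "nat \<Rightarrow> (nat \<Rightarrow> real) \<Rightarrow> real \<Rightarrow> nat" where
  "Ncount n T \<Delta> = card (\<Union>i<n. mults (T i) \<Delta>)"

definition Jlim :: "nat \<Rightarrow> (nat \<Rightarrow> real) \<Rightarrow> ereal" where
  "Jlim n T = Limsup at_top (\<lambda>\<Delta>::real. ereal (real (Ncount n T \<Delta>) / \<Delta>))"

definition Jc :: "nat \<Rightarrow> real \<Rightarrow> (nat \<Rightarrow> real) \<Rightarrow> ereal" where
  "Jc n K0 T = ereal K0 * Jlim n T"

definition Fcost :: "nat \<Rightarrow> real \<Rightarrow> (nat \<Rightarrow> real) \<Rightarrow> (nat \<Rightarrow> real) \<Rightarrow> (nat \<Rightarrow> real) \<Rightarrow> ereal" where
  "Fcost n K0 K H T = Jc n K0 T + ereal (\<Sum>i<n. K i / T i + H i * T i)"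

text \<open>Convex relaxation (P). A point is a pair (Tmin, T). Points with Tmin = 0
  have objective +infinity in the paper and are excluded (they cannot affect the
  infimum or optimality).\<close>

definition P_feasible :: "nat \<Rightarrow> nat \<Rightarrow> (nat \<Rightarrow> nat \<Rightarrow> real) \<Rightarrow> real \<times> (nat \<Rightarrow> real) \<Rightarrow> bool" where
  "P_feasible n D alpha x \<longleftrightarrow>
     fst x > 0 \<and> (\<forall>i<n. snd x i \<ge> fst x) \<and> (\<forall>d<D. (\<Sum>i<n. alpha i d / snd x i) \<le> 1)"

definition P_obj :: "nat \<Rightarrow> real \<Rightarrow> (nat \<Rightarrow> real) \<Rightarrow> (nat \<Rightarrow> real) \<Rightarrow> real \<times> (nat \<Rightarrow> real) \<Rightarrow> real" where
  "P_obj n K0 K H x = K0 / fst x + (\<Sum>i<n. K i / snd x i + H i * snd x i)"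

definition OPT_P :: "nat \<Rightarrow> nat \<Rightarrow> (nat \<Rightarrow> nat \<Rightarrow> real) \<Rightarrow> real \<Rightarrow> (nat \<Rightarrow> real) \<Rightarrow> (nat \<Rightarrow> real) \<Rightarrow> real" where
  "OPT_P n D alpha K0 K H = (INF x\<in>{x. P_feasible n D alpha x}. P_obj n K0 K H x)"

definition grid :: "nat \<Rightarrow> nat \<Rightarrow> real \<Rightarrow> real set" where
  "grid m k Tmin = {(real m) powr (real_of_int p / real k) * Tmin | p::int. True}"

definition round_up :: "nat \<Rightarrow> nat \<Rightarrow> real \<Rightarrow> real \<Rightarrow> real" where
  "round_up m k Tmin t = (LEAST g. g \<in> grid m k Tmin \<and> g > t)"

end

theory Submission imports Defs begin
lemma round_up_props:
  fixes Tm t :: real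
  assumes Tm: "Tm > 0" and tt: "t \<ge> Tm"
  shows "\<exists>p::int. p \<ge> 1 \<and> round_up 2 2 Tm t = 2 powr (real_of_int p / 2) * Tm
          \<and> t < round_up 2 2 Tm t \<and> round_up 2 2 Tm t \<le> sqrt 2 * t"
proof -
  define x where "x = 2 * log 2 (t / Tm)"
  define p0 where "p0 = \<lfloor>x\<rfloor> + 1"
  have tpos: "t > 0" using Tm tt by linarith
  have x0: "x \<ge> 0" unfolding x_def using Tm tt by simp
  have p1: "p0 \<ge> 1" unfolding p0_def using x0 by simp
  have key: "2 powr (y / 2) * Tm > t \<longleftrightarrow> y > x" for y :: real
  proof -
    have "2 powr (y / 2) * Tm > t \<longleftrightarrow> 2 powr (y/2) > t / Tm" using Tm by (simp add: field_simps)
    also have "\<dots> \<longleftrightarrow> y / 2 > log 2 (t / Tm)"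
      using Tm tpos log_less_iff[of 2 "t / Tm" "y / 2"] by simp
    finally show ?thesis unfolding x_def by linarith
  qed
  have g0in: "2 powr (real_of_int p0 / 2) * Tm \<in> grid 2 2 Tm \<and> 2 powr (real_of_int p0 / 2) * Tm > t"
  proof
    show "2 powr (real_of_int p0 / 2) * Tm \<in> grid 2 2 Tm" unfolding grid_def by force
    show "2 powr (real_of_int p0 / 2) * Tm > t" using key[of "real_of_int p0"] unfolding p0_def by linarith
  qed
  have g0min: "2 powr (real_of_int p0 / 2) * Tm \<le> g" if gg: "g \<in> grid 2 2 Tm \<and> g > t" for g
  proof -
    obtain p :: int where g: "g = 2 powr (real_of_int p / 2) * Tm" using gg unfolding grid_def by auto
    have "real_of_int p > x" using key[of "real_of_int p"] gg g by auto
    hence "p \<ge> p0" unfolding p0_def by linarith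
    hence "2 powr (real_of_int p0 / 2) \<le> 2 powr (real_of_int p / 2)" by simp
    thus ?thesis using g Tm by simp
  qed
  have eq: "round_up 2 2 Tm t = 2 powr (real_of_int p0 / 2) * Tm"
    unfolding round_up_def by (rule Least_equality) (use g0in g0min in auto)
  have "real_of_int p0 - 1 \<le> x" unfolding p0_def by simp
  hence "2 powr ((real_of_int p0 - 1) / 2) \<le> 2 powr (log 2 (t / Tm))"
    unfolding x_def by simp
  also have "\<dots> = t / Tm" using Tm tpos by simp
  finally have le: "2 powr ((real_of_int p0 - 1) / 2) * Tm \<le> t" using Tm by (simp add: field_simps)
  have "2 powr (real_of_int p0 / 2) = 2 powr (1/2) * 2 powr ((real_of_int p0 - 1) / 2)"
    by (simp add: powr_add[symmetric] field_simps)
  also have "2 powr (1/2::real) = sqrt 2" by (simp add: powr_half_sqrt)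
  finally have "2 powr (real_of_int p0 / 2) * Tm \<le> sqrt 2 * t"
    using le by (simp add: mult.assoc mult_left_mono)
  thus ?thesis using eq g0in p1 by auto
qed
lemma mults_sub:
  fixes g :: real and j :: nat
  assumes g: "g > 0" and j: "j \<ge> 1"
  shows "mults (real j * g) \<Delta> \<subseteq> mults g \<Delta>"
proof
  fix x assume "x \<in> mults (real j * g) \<Delta>"
  then obtain k :: nat where x: "x = real k * (real j * g)" and k: "k \<le> nat \<lfloor>\<Delta> / (real j * g)\<rfloor>"
    unfolding mults_def by auto
  have "k * j \<le> nat \<lfloor>\<Delta> / g\<rfloor>"
  proof (cases "k = 0")
    case False
    hence "real k \<le> \<Delta> / (real j * g)" using k by linarith
    hence "real k * (real j * g) \<le> \<Delta>" using g j by (simp add: field_simps)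
    hence "real (k * j) \<le> \<Delta> / g" using g by (simp add: field_simps)
    thus ?thesis by linarith
  qed simp
  moreover have "x = real (k * j) * g" using x by simp
  ultimately show "x \<in> mults g \<Delta>" unfolding mults_def by blast
qed

lemma mults_finite_card:
  fixes g :: real
  assumes g: "g > 0" and d: "\<Delta> > 0"
  shows "finite (mults g \<Delta>) \<and> real (card (mults g \<Delta>)) \<le> \<Delta> / g + 1"
proof -
  have eq: "mults g \<Delta> = (\<lambda>k. real k * g) ` {..nat \<lfloor>\<Delta> / g\<rfloor>}" unfolding mults_def by auto
  have "card (mults g \<Delta>) \<le> card {..nat \<lfloor>\<Delta> / g\<rfloor>}" unfolding eq by (rule card_image_le) simp
  also have "\<dots> = nat \<lfloor>\<Delta> / g\<rfloor> + 1" by simp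
  finally have "real (card (mults g \<Delta>)) \<le> real (nat \<lfloor>\<Delta> / g\<rfloor>) + 1" by linarith
  moreover have "real (nat \<lfloor>\<Delta> / g\<rfloor>) \<le> \<Delta> / g" using g d by simp
  ultimately show ?thesis unfolding eq by simp
qed

lemma grid_mults:
  fixes Tm :: real and p :: int
  assumes Tm: "Tm > 0" and p: "p \<ge> 1"
  shows "mults (2 powr (real_of_int p / 2) * Tm) \<Delta> \<subseteq> mults (2 * Tm) \<Delta> \<union> mults (sqrt 2 * Tm) \<Delta>"
proof (cases "even p")
  case True
  then obtain q where q: "p = 2 * q" by blast
  have q1: "q \<ge> 1" using p q by simp
  have "2 powr (real_of_int p / 2) = 2 powr (real_of_int q)" using q by simp
  also have "\<dots> = 2 ^ nat q" using q1 by (simp add: powr_real_of_int)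
  also have "\<dots> = real (2 ^ (nat q - 1)) * 2"
  proof -
    obtain r where r: "nat q = Suc r" using q1 by (metis gr0_implies_Suc zero_less_nat_eq zero_less_one_class.zero_less_one order_less_le_trans)
    show ?thesis unfolding r by simp
  qed
  finally have "2 powr (real_of_int p / 2) * Tm = real (2 ^ (nat q - 1)) * (2 * Tm)" by simp
  moreover have "mults (real (2 ^ (nat q - 1)) * (2 * Tm)) \<Delta> \<subseteq> mults (2 * Tm) \<Delta>"
    by (rule mults_sub) (use Tm in auto)
  ultimately show ?thesis by (metis le_supI1)
next
  case False
  then obtain q where q: "p = 2 * q + 1" using odd_two_times_div_two_succ by metis
  have q1: "q \<ge> 0" using p q by simp
  have "2 powr (real_of_int p / 2) = 2 powr (real_of_int q) * 2 powr (1/2)" using q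
    by (simp add: powr_add[symmetric] add_divide_distrib)
  also have "\<dots> = real (2 ^ nat q) * sqrt 2" using q1 by (simp add: powr_real_of_int powr_half_sqrt)
  finally have "2 powr (real_of_int p / 2) * Tm = real (2 ^ nat q) * (sqrt 2 * Tm)" by simp
  moreover have "mults (real (2 ^ nat q) * (sqrt 2 * Tm)) \<Delta> \<subseteq> mults (sqrt 2 * Tm) \<Delta>"
    by (rule mults_sub) (use Tm in auto)
  ultimately show ?thesis by (metis le_supI2)
qed
theorem lemma2p3:
  fixes n D :: nat and K0 :: real and K H :: "nat \<Rightarrow> real"
    and alpha :: "nat \<Rightarrow> nat \<Rightarrow> real" and Tstar :: "real \<times> (nat \<Rightarrow> real)"
  assumes "n \<ge> 1" and "D \<ge> 1" and "K0 > 0"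
    and "\<forall>i<n. K i > 0" and "\<forall>i<n. H i > 0"
    and "\<forall>i<n. \<forall>d<D. alpha i d \<ge> 0"
    and "P_feasible n D alpha Tstar"
    and "\<forall>x. P_feasible n D alpha x \<longrightarrow> P_obj n K0 K H Tstar \<le> P_obj n K0 K H x"
  defines "T22 \<equiv> (\<lambda>i. round_up 2 2 (fst Tstar) (snd Tstar i))"
  shows "resource_feasible n D alpha T22
    \<and> Fcost n K0 K H T22 \<le> ereal (sqrt 2 * OPT_P n D alpha K0 K H)"
proof -
  define Tm where "Tm = fst Tstar"
  define Ts where "Ts = snd Tstar"
  have Tm: "Tm > 0" and Ts: "\<forall>i<n. Ts i \<ge> Tm"
    and res: "\<forall>d<D. (\<Sum>i<n. alpha i d / Ts i) \<le> 1"
    using assms(7) unfolding P_feasible_def Tm_def Ts_def by auto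
  have T22: "T22 i > Ts i \<and> T22 i \<le> sqrt 2 * Ts i \<and> (\<exists>p::int. p \<ge> 1 \<and> T22 i = 2 powr (real_of_int p / 2) * Tm)"
    if "i < n" for i
    using round_up_props[OF Tm Ts[rule_format, OF that]] unfolding T22_def Tm_def Ts_def by auto
  have Tspos: "Ts i > 0" if "i < n" for i using Tm Ts that by force
  have T22pos: "T22 i > 0" if "i < n" for i using T22[OF that] Tspos[OF that] by linarith
  have RF: "resource_feasible n D alpha T22"
    unfolding resource_feasible_def
  proof (intro conjI allI impI)
    fix i assume "i < n" thus "T22 i > 0" by (rule T22pos)
  next
    fix d assume d: "d < D"
    have "(\<Sum>i<n. alpha i d / T22 i) \<le> (\<Sum>i<n. alpha i d / Ts i)"
    proof (rule sum_mono)
      fix i assume "i \<in> {..<n}"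
      hence i: "i < n" by simp
      show "alpha i d / T22 i \<le> alpha i d / Ts i"
        using assms(6) d i T22[OF i] Tspos[OF i] by (intro divide_left_mono) auto
    qed
    also have "\<dots> \<le> 1" using res d by auto
    finally show "(\<Sum>i<n. alpha i d / T22 i) \<le> 1" .
  qed
  define c where "c = 1 / (2 * Tm) + 1 / (sqrt 2 * Tm)"
  have Nb: "real (Ncount n T22 \<Delta>) / \<Delta> \<le> c + 2 / \<Delta>" if d: "\<Delta> > 0" for \<Delta>
  proof -
    have sub: "(\<Union>i<n. mults (T22 i) \<Delta>) \<subseteq> mults (2 * Tm) \<Delta> \<union> mults (sqrt 2 * Tm) \<Delta>"
    proof (rule UN_least)
      fix i assume "i \<in> {..<n}"
      then obtain p :: int where "p \<ge> 1" "T22 i = 2 powr (real_of_int p / 2) * Tm" using T22 by auto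
      thus "mults (T22 i) \<Delta> \<subseteq> mults (2 * Tm) \<Delta> \<union> mults (sqrt 2 * Tm) \<Delta>"
        using grid_mults[OF Tm] by simp
    qed
    have A: "finite (mults (2 * Tm) \<Delta>) \<and> real (card (mults (2 * Tm) \<Delta>)) \<le> \<Delta> / (2 * Tm) + 1"
      by (rule mults_finite_card) (use Tm d in auto)
    have B: "finite (mults (sqrt 2 * Tm) \<Delta>) \<and> real (card (mults (sqrt 2 * Tm) \<Delta>)) \<le> \<Delta> / (sqrt 2 * Tm) + 1"
      by (rule mults_finite_card) (use Tm d in auto)
    have "Ncount n T22 \<Delta> \<le> card (mults (2 * Tm) \<Delta> \<union> mults (sqrt 2 * Tm) \<Delta>)"
      unfolding Ncount_def by (rule card_mono) (use A B sub in auto)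
    also have "\<dots> \<le> card (mults (2 * Tm) \<Delta>) + card (mults (sqrt 2 * Tm) \<Delta>)" by (rule card_Un_le)
    finally have "real (Ncount n T22 \<Delta>) \<le> \<Delta> / (2 * Tm) + 1 + (\<Delta> / (sqrt 2 * Tm) + 1)"
      using A B by linarith
    hence "real (Ncount n T22 \<Delta>) / \<Delta> \<le> (\<Delta> / (2 * Tm) + 1 + (\<Delta> / (sqrt 2 * Tm) + 1)) / \<Delta>"
      using d by (simp add: divide_right_mono)
    also have "\<dots> = c + 2 / \<Delta>" unfolding c_def using d Tm by (simp add: field_simps)
    finally show ?thesis .
  qed
  have "Jlim n T22 \<le> Limsup at_top (\<lambda>\<Delta>::real. ereal (c + 2 / \<Delta>))"
    unfolding Jlim_def
  proof (rule Limsup_mono)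
    show "\<forall>\<^sub>F x in at_top. ereal (real (Ncount n T22 x) / x) \<le> ereal (c + 2 / x)"
      using eventually_gt_at_top[of "0::real"] by eventually_elim (use Nb in simp)
  qed
  also have "\<dots> = ereal c"
  proof (rule lim_imp_Limsup)
    show "\<not> trivial_limit (at_top :: real filter)" by simp
    have "((\<lambda>\<Delta>::real. c + 2 / \<Delta>) \<longlongrightarrow> c) at_top" 
      using tendsto_add[OF tendsto_const[of c] tendsto_divide_0[OF tendsto_const[of "2::real"] filterlim_at_top_imp_at_infinity[OF filterlim_ident]]]
      by simp
    thus "((\<lambda>\<Delta>::real. ereal (c + 2 / \<Delta>)) \<longlongrightarrow> ereal c) at_top" by (rule tendsto_ereal)
  qed
  finally have Jl: "Jlim n T22 \<le> ereal c" .
  have "Jc n K0 T22 \<le> ereal K0 * ereal c" unfolding Jc_def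
    by (rule ereal_mult_left_mono) (use Jl assms(3) in auto)
  hence Jcb: "Jc n K0 T22 \<le> ereal (K0 * c)" by simp
  have S: "(\<Sum>i<n. K i / T22 i + H i * T22 i) \<le> (\<Sum>i<n. sqrt 2 * (K i / Ts i + H i * Ts i))"
  proof (rule sum_mono)
    fix i assume "i \<in> {..<n}"
    hence i: "i < n" by simp
    have Ki: "K i > 0" "H i > 0" using assms(4,5) i by auto
    have "K i / T22 i \<le> K i / Ts i" using Ki T22[OF i] Tspos[OF i] by (intro divide_left_mono) auto
    also have "\<dots> \<le> sqrt 2 * (K i / Ts i)"
    proof -
      have "1 * (K i / Ts i) \<le> sqrt 2 * (K i / Ts i)"
        by (rule mult_right_mono) (use Ki Tspos[OF i] in auto)
      thus ?thesis by simp
    qed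
    finally have a: "K i / T22 i \<le> sqrt 2 * (K i / Ts i)" .
    have b: "H i * T22 i \<le> sqrt 2 * (H i * Ts i)" using Ki T22[OF i]
      by (metis mult.left_commute mult_le_cancel_left_pos)
    show "K i / T22 i + H i * T22 i \<le> sqrt 2 * (K i / Ts i + H i * Ts i)"
      using a b by (simp add: distrib_left)
  qed
  have opt: "OPT_P n D alpha K0 K H = P_obj n K0 K H Tstar"
    unfolding OPT_P_def
  proof (rule antisym)
    show "(INF x\<in>{x. P_feasible n D alpha x}. P_obj n K0 K H x) \<le> P_obj n K0 K H Tstar"
      by (rule cINF_lower) (use assms(7,8) in \<open>auto intro!: bdd_belowI2\<close>)
    show "P_obj n K0 K H Tstar \<le> (INF x\<in>{x. P_feasible n D alpha x}. P_obj n K0 K H x)"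
    proof (rule cINF_greatest)
      show "{x. P_feasible n D alpha x} \<noteq> {}" using assms(7) by blast
    qed (use assms(8) in blast)
  qed
  have cb: "K0 * c \<le> sqrt 2 * (K0 / Tm)"
  proof -
    have s2: "sqrt 2 * sqrt 2 = (2::real)" by simp
    have "c = (1/2 + 1 / sqrt 2) / Tm" unfolding c_def using Tm by (simp add: field_simps)
    also have "1/2 + 1 / sqrt 2 \<le> sqrt 2"
    proof -
      have "1 / sqrt 2 = sqrt 2 / 2" using s2 by (simp add: field_simps)
      moreover have "1 \<le> sqrt (2::real)" by simp
      ultimately show ?thesis by linarith
    qed
    hence "(1/2 + 1 / sqrt 2) / Tm \<le> sqrt 2 / Tm" using Tm by (simp add: divide_right_mono)
    finally have "c \<le> sqrt 2 / Tm" .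
    hence "K0 * c \<le> K0 * (sqrt 2 / Tm)" using assms(3) by (intro mult_left_mono) auto
    thus ?thesis by (simp add: mult.commute)
  qed
  have "Fcost n K0 K H T22 \<le> ereal (K0 * c) + ereal (\<Sum>i<n. K i / T22 i + H i * T22 i)"
    unfolding Fcost_def using Jcb by (rule add_right_mono)
  also have "\<dots> = ereal (K0 * c + (\<Sum>i<n. K i / T22 i + H i * T22 i))" by simp
  also have "\<dots> \<le> ereal (sqrt 2 * OPT_P n D alpha K0 K H)"
  proof -
    have "K0 * c + (\<Sum>i<n. K i / T22 i + H i * T22 i) \<le> sqrt 2 * (K0 / Tm) + sqrt 2 * (\<Sum>i<n. K i / Ts i + H i * Ts i)"
      using cb S by (simp add: sum_distrib_left)
    also have "\<dots> = sqrt 2 * OPT_P n D alpha K0 K H"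
      unfolding opt P_obj_def Tm_def Ts_def by (simp add: distrib_left)
    finally show ?thesis by simp
  qed
  finally show ?thesis using RF by simp
qed
end
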